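(* (a) Fix $i\in\{1,\dots,m_x\}$ and suppose $(\underline b,\bar b,\underline S_{[i]},\bar S_{[i]})$ with $\underline S_{[i]}\in\mathbb{D}_+^{\underline m}$, $\bar S_{[i]}\in\mathbb{D}_+^{\bar m}$ satisfies condition (X$_i$). Consider the LMI in $(\underline{\mathbf b},\bar{\mathbf b},\hat{\underline{\mathbf S}}_{[i]},\hat{\bar{\mathbf S}}_{[i]})$: $$\begin{bmatrix} \hat{\underline{\mathbf S}}_{[i]} & \mathbf 0 & \underline{\mathbf b} & \mathbf 0 & \mathbf 0\\ * & \hat{\bar{\mathbf S}}_{[i]} & \bar{\mathbf b} & \mathbf 0 & \mathbf 0\\ * & * & 2v^x_i & V^x_i & V^x_i\\ * & * & * & \mathcal{L}^{\underline P,\underline S_{[i]}^{-1}}_{\underline P,\hat{\underline{\mathbf S}}_{[i]}} & \mathbf 0\\ * & * & * & * & \mathcal{L}^{\bar P,\bar S_{[i]}^{-1}}_{\bar P,\hat{\bar{\mathbf S}}_{[i]}} \end{bmatrix}\succ0.$$ Then it is satisfied by $(\underline b,\bar b,\underline S_{[i]}^{-1},\bar S_{[i]}^{-1})$, and any solution with $\hat{\underline{\mathbf S}}_{[i]}\in\mathbb{D}_+^{\underline m}$, $\hat{\bar{\mathbf S}}_{[i]}\in\mathbb{D}_+^{\bar m}$ gives $(\underline{\mathbf b},\bar{\mathbf b},\hat{\underline{\mathbf S}}_{[i]}^{-1},\hat{\bar{\mathbf S}}_{[i]}^{-1})$ satisfying (X$_i$). (b) Fix $i\in\{1,\dots,m_u\}$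 and suppose $(K,\underline b,\bar b,\underline R_{[i]},\bar R_{[i]})$ with $\underline R_{[i]}\in\mathbb{D}_+^{\underline m}$, $\bar R_{[i]}\in\mathbb{D}_+^{\bar m}$ satisfies condition (U$_i$). Consider the LMI in $(\mathbf K,\underline{\mathbf b},\bar{\mathbf b},\hat{\underline{\mathbf R}}_{[i]},\hat{\bar{\mathbf R}}_{[i]})$: $$\begin{bmatrix} \hat{\underline{\mathbf R}}_{[i]} & \mathbf 0 & \underline{\mathbf b} & \mathbf 0 & \mathbf 0\\ * & \hat{\bar{\mathbf R}}_{[i]} & \bar{\mathbf b} & \mathbf 0 & \mathbf 0\\ * & * & 2v^u_i & V^u_i\mathbf K & V^u_i\mathbf K\\ * & * & * & \mathcal{L}^{\underline P,\underline R_{[i]}^{-1}}_{\underline P,\hat{\underline{\mathbf R}}_{[i]}} & \mathbf 0\\ * & * & * & * & \mathcal{L}^{\bar P,\bar R_{[i]}^{-1}}_{\bar P,\hat{\bar{\mathbf R}}_{[i]}} \end{bmatrix}\succ0.$$ Then it is satisfied by $(K,\underline b,\bar b,\underline R_{[i]}^{-1},\bar R_{[i]}^{-1})$, and any solution with $\hat{\underline{\mathbf R}}_{[i]}\in\mathbb{D}_+^{\underline m}$, $\hat{\bar{\mathbf R}}_{[i]}\in\mathbb{D}_+^{\bar m}$ gives $(\mathbf K,\underline{\mathbf b},\bar{\mathbf b},\hat{\underline{\mathbf R}}_{[i]}^{-1},\hat{\bar{\mathbf R}}_{[i]}^{-1})$ satisfying (U$_i$).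
   Context: Notation: $M_i$ is the $i$-th row of $M$, $b_i$ the $i$-th entry of $b$; $\mathbb{D}_+^m$ is the set of $m\times m$ diagonal matrices with positive diagonal; $\succ0$ means symmetric positive definite; $*$ denotes symmetric blocks. For $\mathbf L,L\in\mathbb{R}^{m\times n}$ and symmetric invertible $\mathbf D,D\in\mathbb{R}^{m\times m}$, $\mathcal{L}^{L,D}_{\mathbf L,\mathbf D}:=\mathbf L^\top D^{-1}L+L^\top D^{-1}\mathbf L-L^\top D^{-1}\mathbf DD^{-1}L$. Fixed data: $\underline P\in\mathbb{R}^{\underline m\times n_x}$, $\bar P\in\mathbb{R}^{\bar m\times n_x}$, $V^x\in\mathbb{R}^{m_x\times n_x}$, $v^x\in\mathbb{R}^{m_x}$, $V^u\in\mathbb{R}^{m_u\times n_u}$, $v^u\in\mathbb{R}^{m_u}$. Variables $\underline b\in\mathbb{R}^{\underline m}$, $\bar b\in\mathbb{R}^{\bar m}$, $K\in\mathbb{R}^{n_u\times n_x}$. Condition (X$_i$): $$\begin{bmatrix}2v^x_i-\underline b^\top\underline S_{[i]}\underline b-\bar b^\top\bar S_{[i]}\bar b & V^x_i & V^x_i\\ * & \underline P^\top\underline S_{[i]}\underline P & \mathbf 0\\ * & * & \bar P^\top\bar S_{[i]}\bar P\end{bmatrix}\succ0.$$ Condition (U$_i$): $$\begin{bmatrix}2v^u_i-\underline b^\top\underline R_{[i]}\underline b-\bar b^\top\bar R_{[i]}\bar b & V^u_iK & V^u_iK\\ * & \underline P^\top\underline R_{[i]}\underline P & \mathbf 0\\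 * & * & \bar P^\top\bar R_{[i]}\bar P\end{bmatrix}\succ0.$$ *)

theory Defs
  imports "Jordan_Normal_Form.Gauss_Jordan_Elimination"
begin

definition posdef :: "real mat \<Rightarrow> bool" where
  "posdef M \<longleftrightarrow> M \<in> carrier_mat (dim_row M) (dim_row M) \<and> transpose_mat M = M \<and>
     (\<forall>x \<in> carrier_vec (dim_row M). x \<noteq> 0\<^sub>v (dim_row M) \<longrightarrow> x \<bullet> (M *\<^sub>v x) > 0)"

definition Dplus :: "nat \<Rightarrow> real mat \<Rightarrow> bool" where
  "Dplus m D \<longleftrightarrow> D \<in> carrier_mat m m \<and> diagonal_mat D \<and> (\<forall>i<m. D $$ (i,i) > 0)"

(* matrix inverse (meaningful for invertible square matrices) *)
definition minv :: "real mat \<Rightarrow> real mat" where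
  "minv A = the (mat_inverse A)"

(* \<L>^{L,D}_{Lb,Db} = Lb^T D^-1 L + L^T D^-1 Lb - L^T D^-1 Db D^-1 L *)
definition Lcal :: "real mat \<Rightarrow> real mat \<Rightarrow> real mat \<Rightarrow> real mat \<Rightarrow> real mat" where
  "Lcal Lb Db L D = transpose_mat Lb * minv D * L + transpose_mat L * minv D * Lb
                    - transpose_mat L * minv D * Db * minv D * L"

definition hcat :: "real mat \<Rightarrow> real mat \<Rightarrow> real mat" where
  "hcat A B = four_block_mat A B (0\<^sub>m 0 (dim_col A)) (0\<^sub>m 0 (dim_col B))"

definition vcat :: "real mat \<Rightarrow> real mat \<Rightarrow> real mat" where
  "vcat A B = four_block_mat A (0\<^sub>m (dim_row A) 0) B (0\<^sub>m (dim_row B) 0)"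

(* Generic 3x3 block condition; r is a 1 x n row, c a scalar.
   (X_i): c = v^x_i, r = V^x_i;  (U_i): c = v^u_i, r = V^u_i K *)
definition cond3 :: "real \<Rightarrow> real mat \<Rightarrow> real mat \<Rightarrow> real mat \<Rightarrow>
    real vec \<Rightarrow> real vec \<Rightarrow> real mat \<Rightarrow> real mat \<Rightarrow> bool" where
  "cond3 c r Pl Pb bl bb Sl Sb =
    (let n = dim_col Pl;
         s = mat 1 1 (\<lambda>_. 2 * c - bl \<bullet> (Sl *\<^sub>v bl) - bb \<bullet> (Sb *\<^sub>v bb))
     in posdef
       (vcat (hcat s (hcat r r))
        (vcat (hcat (transpose_mat r) (hcat (transpose_mat Pl * Sl * Pl) (0\<^sub>m n n)))
              (hcat (transpose_mat r) (hcat (0\<^sub>m n n) (transpose_mat Pb * Sb * Pb))))))"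

definition condX :: "real mat \<Rightarrow> real mat \<Rightarrow> real mat \<Rightarrow> real vec \<Rightarrow> nat \<Rightarrow>
    real vec \<Rightarrow> real vec \<Rightarrow> real mat \<Rightarrow> real mat \<Rightarrow> bool" where
  "condX Pl Pb Vx vx i bl bb Sl Sb =
     cond3 (vx $ i) (mat_of_rows (dim_col Vx) [row Vx i]) Pl Pb bl bb Sl Sb"

definition condU :: "real mat \<Rightarrow> real mat \<Rightarrow> real mat \<Rightarrow> real vec \<Rightarrow> nat \<Rightarrow>
    real mat \<Rightarrow> real vec \<Rightarrow> real vec \<Rightarrow> real mat \<Rightarrow> real mat \<Rightarrow> bool" where
  "condU Pl Pb Vu vu i K bl bb Rl Rb =
     cond3 (vu $ i) (mat_of_rows (dim_col Vu) [row Vu i] * K) Pl Pb bl bb Rl Rb"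

(* Generic 5x5 block LMI in (bl, bb, Sh, Sbh); Sl, Sb are the fixed matrices from
   the given feasible point entering via \<L>^{P,S^-1}_{P,Sh}. *)
definition lmi5 :: "real \<Rightarrow> real mat \<Rightarrow> real mat \<Rightarrow> real mat \<Rightarrow> real mat \<Rightarrow> real mat \<Rightarrow>
    real vec \<Rightarrow> real vec \<Rightarrow> real mat \<Rightarrow> real mat \<Rightarrow> bool" where
  "lmi5 c r Pl Pb Sl Sb bl bb Sh Sbh =
    (let n = dim_col Pl; ml = dim_row Pl; mb = dim_row Pb
     in posdef
      (vcat (hcat Sh (hcat (0\<^sub>m ml mb) (hcat (mat_of_cols ml [bl]) (hcat (0\<^sub>m ml n) (0\<^sub>m ml n)))))
      (vcat (hcat (0\<^sub>m mb ml) (hcat Sbh (hcat (mat_of_cols mb [bb]) (hcat (0\<^sub>m mb n) (0\<^sub>m mb n)))))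
      (vcat (hcat (mat_of_rows ml [bl]) (hcat (mat_of_rows mb [bb]) (hcat (mat 1 1 (\<lambda>_. 2 * c)) (hcat r r))))
      (vcat (hcat (0\<^sub>m n ml) (hcat (0\<^sub>m n mb) (hcat (transpose_mat r)
                 (hcat (Lcal Pl Sh Pl (minv Sl)) (0\<^sub>m n n)))))
            (hcat (0\<^sub>m n ml) (hcat (0\<^sub>m n mb) (hcat (transpose_mat r)
                 (hcat (0\<^sub>m n n) (Lcal Pb Sbh Pb (minv Sb)))))))))))"

definition lmiX :: "real mat \<Rightarrow> real mat \<Rightarrow> real mat \<Rightarrow> real vec \<Rightarrow> nat \<Rightarrow> real mat \<Rightarrow> real mat \<Rightarrow>
    real vec \<Rightarrow> real vec \<Rightarrow> real mat \<Rightarrow> real mat \<Rightarrow> bool" where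
  "lmiX Pl Pb Vx vx i Sl Sb bl bb Sh Sbh =
     lmi5 (vx $ i) (mat_of_rows (dim_col Vx) [row Vx i]) Pl Pb Sl Sb bl bb Sh Sbh"

definition lmiU :: "real mat \<Rightarrow> real mat \<Rightarrow> real mat \<Rightarrow> real vec \<Rightarrow> nat \<Rightarrow> real mat \<Rightarrow> real mat \<Rightarrow>
    real mat \<Rightarrow> real vec \<Rightarrow> real vec \<Rightarrow> real mat \<Rightarrow> real mat \<Rightarrow> bool" where
  "lmiU Pl Pb Vu vu i Rl Rb K bl bb Rh Rbh =
     lmi5 (vu $ i) (mat_of_rows (dim_col Vu) [row Vu i] * K) Pl Pb Rl Rb bl bb Rh Rbh"

end

theory Submission
  imports Defs
begin

lemma hcat_carrier[simp]: "A \<in> carrier_mat n k1 \<Longrightarrow> B \<in> carrier_mat n k2 \<Longrightarrow> hcat A B \<in> carrier_mat n (k1+k2)"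
  unfolding hcat_def carrier_mat_def by (simp add: index_mat_four_block)

lemma vcat_carrier[simp]: "A \<in> carrier_mat n1 k \<Longrightarrow> B \<in> carrier_mat n2 k \<Longrightarrow> vcat A B \<in> carrier_mat (n1+n2) k"
  unfolding vcat_def carrier_mat_def by (simp add: index_mat_four_block)


lemma vcat_mult: assumes A: "A \<in> carrier_mat n1 k" and B: "B \<in> carrier_mat n2 k" and y: "y \<in> carrier_vec k"
  shows "vcat A B *\<^sub>v y = (A *\<^sub>v y) @\<^sub>v (B *\<^sub>v y)"
proof -
  define e where "e = (vec 0 (\<lambda>_. 0) :: real vec)"
  have e: "e \<in> carrier_vec 0" unfolding e_def by simp
  have y': "y @\<^sub>v e = y" using y e by (intro eq_vecI) auto
  have "vcat A B *\<^sub>v (y @\<^sub>v e) = (A *\<^sub>v y + 0\<^sub>m n1 0 *\<^sub>v e) @\<^sub>v (B *\<^sub>v y + 0\<^sub>m n2 0 *\<^sub>v e)"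
  proof -
    have d: "dim_row A = n1" "dim_row B = n2" using A B by auto
    show ?thesis unfolding vcat_def d by (rule four_block_mat_mult_vec[OF A _ B _ y e]) auto
  qed
  also have "A *\<^sub>v y + 0\<^sub>m n1 0 *\<^sub>v e = A *\<^sub>v y" using A e by (intro eq_vecI) (auto simp: scalar_prod_def)
  also have "B *\<^sub>v y + 0\<^sub>m n2 0 *\<^sub>v e = B *\<^sub>v y" using B e by (intro eq_vecI) (auto simp: scalar_prod_def)
  finally show ?thesis unfolding y' .
qed

lemma hcat_mult: assumes A: "A \<in> carrier_mat n k1" and B: "B \<in> carrier_mat n k2" and y1: "y1 \<in> carrier_vec k1" and y2: "y2 \<in> carrier_vec k2"
  shows "hcat A B *\<^sub>v (y1 @\<^sub>v y2) = A *\<^sub>v y1 + B *\<^sub>v y2"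
proof -
  have "hcat A B *\<^sub>v (y1 @\<^sub>v y2) = (A *\<^sub>v y1 + B *\<^sub>v y2) @\<^sub>v (0\<^sub>m 0 k1 *\<^sub>v y1 + 0\<^sub>m 0 k2 *\<^sub>v y2)"
  proof -
    have d: "dim_col A = k1" "dim_col B = k2" using A B by auto
    show ?thesis unfolding hcat_def d by (rule four_block_mat_mult_vec[OF A B _ _ y1 y2]) auto
  qed
  also have "\<dots> = A *\<^sub>v y1 + B *\<^sub>v y2"
    using A B y1 y2 by (intro eq_vecI) auto
  finally show ?thesis .
qed

lemma tr_sp: fixes A :: "real mat" assumes "A \<in> carrier_mat nr nc" "x \<in> carrier_vec nc" "y \<in> carrier_vec nr"
  shows "x \<bullet> (transpose_mat A *\<^sub>v y) = y \<bullet> (A *\<^sub>v x)"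
  using transpose_vec_mult_scalar[OF assms] comm_scalar_prod[of x nc "transpose_mat A *\<^sub>v y"] assms by auto

lemma zmv: "v \<in> carrier_vec m \<Longrightarrow> 0\<^sub>m n m *\<^sub>v v = (0\<^sub>v n :: real vec)"
  by (intro eq_vecI) auto

definition M3 :: "real \<Rightarrow> real mat \<Rightarrow> real mat \<Rightarrow> real mat \<Rightarrow> nat \<Rightarrow> real mat" where
  "M3 a r X Y n = vcat (hcat (mat 1 1 (\<lambda>_. a)) (hcat r r))
        (vcat (hcat (transpose_mat r) (hcat X (0\<^sub>m n n)))
              (hcat (transpose_mat r) (hcat (0\<^sub>m n n) Y)))"

lemma M3_carrier: "r \<in> carrier_mat 1 n \<Longrightarrow> X \<in> carrier_mat n n \<Longrightarrow> Y \<in> carrier_mat n n \<Longrightarrow>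
   M3 a r X Y n \<in> carrier_mat (1 + (n + n)) (1 + (n + n))"
  unfolding M3_def by (intro vcat_carrier hcat_carrier) auto

lemma sc1: fixes a :: real shows "x \<in> carrier_vec 1 \<Longrightarrow> y \<in> carrier_vec 1 \<Longrightarrow> x \<bullet> (mat 1 1 (\<lambda>_. a) *\<^sub>v y) = a * x$0 * y$0"
  by (simp add: scalar_prod_def mult_mat_vec_def row_def)

lemma M3_bil: assumes r: "r \<in> carrier_mat 1 n" and X: "X \<in> carrier_mat n n" and Y: "Y \<in> carrier_mat n n"
  and v: "x0 \<in> carrier_vec 1" "x1 \<in> carrier_vec n" "x2 \<in> carrier_vec n"
    "y0 \<in> carrier_vec 1" "y1 \<in> carrier_vec n" "y2 \<in> carrier_vec n"
  shows "(x0 @\<^sub>v (x1 @\<^sub>v x2)) \<bullet> (M3 a r X Y n *\<^sub>v (y0 @\<^sub>v (y1 @\<^sub>v y2))) =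
    a * x0$0 * y0$0 + x0 \<bullet> (r *\<^sub>v y1) + x0 \<bullet> (r *\<^sub>v y2) + y0 \<bullet> (r *\<^sub>v x1) + x1 \<bullet> (X *\<^sub>v y1)
    + y0 \<bullet> (r *\<^sub>v x2) + x2 \<bullet> (Y *\<^sub>v y2)"
proof -
  have rt: "transpose_mat r \<in> carrier_mat n 1" using r by auto
  have yy: "y0 @\<^sub>v (y1 @\<^sub>v y2) \<in> carrier_vec (1 + (n + n))" by (intro append_carrier_vec v)
  have "M3 a r X Y n *\<^sub>v (y0 @\<^sub>v (y1 @\<^sub>v y2)) =
     (mat 1 1 (\<lambda>_. a) *\<^sub>v y0 + (r *\<^sub>v y1 + r *\<^sub>v y2)) @\<^sub>v
     ((transpose_mat r *\<^sub>v y0 + (X *\<^sub>v y1 + 0\<^sub>m n n *\<^sub>v y2)) @\<^sub>v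
      (transpose_mat r *\<^sub>v y0 + (0\<^sub>m n n *\<^sub>v y1 + Y *\<^sub>v y2)))"
  proof -
    have m: "mat 1 1 (\<lambda>_. a) \<in> carrier_mat 1 1" by simp
    have z: "0\<^sub>m n n \<in> carrier_mat n n" by simp
    have R0: "hcat (mat 1 1 (\<lambda>_. a)) (hcat r r) \<in> carrier_mat 1 (1 + (n + n))"
      using r by (intro hcat_carrier m)
    have R1: "hcat (transpose_mat r) (hcat X (0\<^sub>m n n)) \<in> carrier_mat n (1 + (n + n))"
      using rt X by (intro hcat_carrier z)
    have R2: "hcat (transpose_mat r) (hcat (0\<^sub>m n n) Y) \<in> carrier_mat n (1 + (n + n))"
      using rt Y by (intro hcat_carrier z)
    have yr: "y1 @\<^sub>v y2 \<in> carrier_vec (n + n)" by (intro append_carrier_vec v)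
    show ?thesis unfolding M3_def
      vcat_mult[OF R0 vcat_carrier[OF R1 R2] yy] vcat_mult[OF R1 R2 yy]
      hcat_mult[OF m hcat_carrier[OF r r] v(4) yr] hcat_mult[OF r r v(5,6)]
      hcat_mult[OF rt hcat_carrier[OF X z] v(4) yr] hcat_mult[OF X z v(5,6)]
      hcat_mult[OF rt hcat_carrier[OF z Y] v(4) yr] hcat_mult[OF z Y v(5,6)] ..
  qed
  also have "\<dots> = (mat 1 1 (\<lambda>_. a) *\<^sub>v y0 + (r *\<^sub>v y1 + r *\<^sub>v y2)) @\<^sub>v
     ((transpose_mat r *\<^sub>v y0 + X *\<^sub>v y1) @\<^sub>v
      (transpose_mat r *\<^sub>v y0 + Y *\<^sub>v y2))"
    using v X Y rt by (simp add: zmv)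
  finally have e: "M3 a r X Y n *\<^sub>v (y0 @\<^sub>v (y1 @\<^sub>v y2)) = \<dots>" .
  have c00: "mat 1 1 (\<lambda>_. a) *\<^sub>v y0 \<in> carrier_vec 1" by (rule carrier_vecI) simp
  have c: "mat 1 1 (\<lambda>_. a) *\<^sub>v y0 \<in> carrier_vec 1" "r *\<^sub>v y1 \<in> carrier_vec 1" "r *\<^sub>v y2 \<in> carrier_vec 1"
    "transpose_mat r *\<^sub>v y0 \<in> carrier_vec n" "X *\<^sub>v y1 \<in> carrier_vec n" "Y *\<^sub>v y2 \<in> carrier_vec n"
    using r X Y v rt c00 by auto
  have c0: "mat 1 1 (\<lambda>_. a) *\<^sub>v y0 + (r *\<^sub>v y1 + r *\<^sub>v y2) \<in> carrier_vec 1"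
    and c1: "transpose_mat r *\<^sub>v y0 + X *\<^sub>v y1 \<in> carrier_vec n"
    and c2: "transpose_mat r *\<^sub>v y0 + Y *\<^sub>v y2 \<in> carrier_vec n" using c by auto
  show ?thesis unfolding e
    scalar_prod_append[OF v(1) append_carrier_vec[OF v(2,3)] c0 append_carrier_vec[OF c1 c2]]
    scalar_prod_append[OF v(2,3) c1 c2]
    scalar_prod_add_distrib[OF v(1) c(1) add_carrier_vec[OF c(2,3)]]
    scalar_prod_add_distrib[OF v(1) c(2,3)]
    scalar_prod_add_distrib[OF v(2) c(4,5)]
    scalar_prod_add_distrib[OF v(3) c(4,6)]
    sc1[OF v(1,4)] tr_sp[OF r v(2) v(4)] tr_sp[OF r v(3) v(4)]
    by simp
qed

lemma dim_hcat[simp]: "dim_row (hcat A B) = dim_row A" "dim_col (hcat A B) = dim_col A + dim_col B"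
  unfolding hcat_def by simp_all
lemma dim_vcat[simp]: "dim_row (vcat A B) = dim_row A + dim_row B" "dim_col (vcat A B) = dim_col A"
  unfolding vcat_def by simp_all

lemma vcat_mult': "dim_col B = dim_col A \<Longrightarrow> dim_vec y = dim_col A \<Longrightarrow>
   vcat A B *\<^sub>v y = (A *\<^sub>v y) @\<^sub>v (B *\<^sub>v y)"
  by (rule vcat_mult[of A "dim_row A" "dim_col A" B "dim_row B"]) (auto intro: carrier_matI carrier_vecI)

lemma hcat_mult': "dim_row B = dim_row A \<Longrightarrow> dim_vec y1 = dim_col A \<Longrightarrow> dim_vec y2 = dim_col B \<Longrightarrow>
   hcat A B *\<^sub>v (y1 @\<^sub>v y2) = A *\<^sub>v y1 + B *\<^sub>v y2"
  by (rule hcat_mult[of A "dim_row A" "dim_col A" B "dim_col B"]) (auto intro: carrier_matI carrier_vecI)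

lemma spa': "dim_vec w1 = dim_vec v1 \<Longrightarrow> dim_vec w2 = dim_vec v2 \<Longrightarrow>
  (v1 @\<^sub>v v2) \<bullet> (w1 @\<^sub>v w2) = v1 \<bullet> w1 + v2 \<bullet> w2"
  by (rule scalar_prod_append[of v1 "dim_vec v1" v2 "dim_vec v2"]) (auto intro: carrier_vecI)

lemma spd': "dim_vec v2 = dim_vec (v1 :: real vec) \<Longrightarrow> dim_vec v3 = dim_vec v1 \<Longrightarrow>
  v1 \<bullet> (v2 + v3) = v1 \<bullet> v2 + v1 \<bullet> v3"
  by (rule scalar_prod_add_distrib[of v1 "dim_vec v1" v2 v3]) (auto intro: carrier_vecI)

lemma zmv': "dim_vec v = m \<Longrightarrow> 0\<^sub>m n m *\<^sub>v v = (0\<^sub>v n :: real vec)"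
  by (intro eq_vecI) auto

lemma zl': "dim_vec v = n \<Longrightarrow> 0\<^sub>v n + v = (v :: real vec)"
  by (intro eq_vecI) auto
lemma zr': "dim_vec v = n \<Longrightarrow> v + 0\<^sub>v n = (v :: real vec)"
  by (intro eq_vecI) auto

lemma colv: "dim_vec v = m \<Longrightarrow> dim_vec t = 1 \<Longrightarrow> dim_vec x = m \<Longrightarrow> x \<bullet> (mat_of_cols m [v] *\<^sub>v t) = t$0 * (x \<bullet> (v :: real vec))"
  by (simp add: scalar_prod_def mult_mat_vec_def row_def mat_of_cols_def sum_distrib_left) (simp add: ac_simps)

lemma rowv: "dim_vec v = m \<Longrightarrow> dim_vec x = 1 \<Longrightarrow> dim_vec y = m \<Longrightarrow> x \<bullet> (mat_of_rows m [v] *\<^sub>v y) = x$0 * (v \<bullet> (y :: real vec))"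
  by (simp add: scalar_prod_def mult_mat_vec_def row_def mat_of_rows_def)

lemma sc1': fixes a :: real shows "dim_vec x = 1 \<Longrightarrow> dim_vec y = 1 \<Longrightarrow> x \<bullet> (mat (Suc 0) (Suc 0) (\<lambda>_. a) *\<^sub>v y) = a * x$0 * y$0"
  by (simp add: scalar_prod_def mult_mat_vec_def row_def)

lemma tr_sp': fixes A :: "real mat" shows "dim_vec x = dim_col A \<Longrightarrow> dim_vec y = dim_row A \<Longrightarrow>
  x \<bullet> (transpose_mat A *\<^sub>v y) = y \<bullet> (A *\<^sub>v x)"
  by (rule tr_sp[of A "dim_row A" "dim_col A"]) (auto intro: carrier_matI carrier_vecI)

definition M5 :: "real \<Rightarrow> real mat \<Rightarrow> nat \<Rightarrow> nat \<Rightarrow> nat \<Rightarrow> real vec \<Rightarrow> real vec \<Rightarrow> real mat \<Rightarrow> real mat \<Rightarrow> real mat \<Rightarrow> real mat \<Rightarrow> real mat" where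
  "M5 c r n ml mb bl bb Sh Sbh L1 L2 =
      (vcat (hcat Sh (hcat (0\<^sub>m ml mb) (hcat (mat_of_cols ml [bl]) (hcat (0\<^sub>m ml n) (0\<^sub>m ml n)))))
      (vcat (hcat (0\<^sub>m mb ml) (hcat Sbh (hcat (mat_of_cols mb [bb]) (hcat (0\<^sub>m mb n) (0\<^sub>m mb n)))))
      (vcat (hcat (mat_of_rows ml [bl]) (hcat (mat_of_rows mb [bb]) (hcat (mat 1 1 (\<lambda>_. 2 * c)) (hcat r r))))
      (vcat (hcat (0\<^sub>m n ml) (hcat (0\<^sub>m n mb) (hcat (transpose_mat r)
                 (hcat L1 (0\<^sub>m n n)))))
            (hcat (0\<^sub>m n ml) (hcat (0\<^sub>m n mb) (hcat (transpose_mat r)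
                 (hcat (0\<^sub>m n n) L2))))))))"

lemma M5_bil: assumes r: "r \<in> carrier_mat 1 n" and Sh: "Sh \<in> carrier_mat ml ml" and Sbh: "Sbh \<in> carrier_mat mb mb"
  and L1: "L1 \<in> carrier_mat n n" and L2: "L2 \<in> carrier_mat n n"
  and b: "bl \<in> carrier_vec ml" "bb \<in> carrier_vec mb"
  and v: "x1 \<in> carrier_vec ml" "x2 \<in> carrier_vec mb" "x3 \<in> carrier_vec 1" "x4 \<in> carrier_vec n" "x5 \<in> carrier_vec n"
    "y1 \<in> carrier_vec ml" "y2 \<in> carrier_vec mb" "y3 \<in> carrier_vec 1" "y4 \<in> carrier_vec n" "y5 \<in> carrier_vec n"
  shows "(x1 @\<^sub>v (x2 @\<^sub>v (x3 @\<^sub>v (x4 @\<^sub>v x5)))) \<bullet> (M5 c r n ml mb bl bb Sh Sbh L1 L2 *\<^sub>v (y1 @\<^sub>v (y2 @\<^sub>v (y3 @\<^sub>v (y4 @\<^sub>v y5))))) =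
    x1 \<bullet> (Sh *\<^sub>v y1) + y3$0 * (x1 \<bullet> bl) + (x2 \<bullet> (Sbh *\<^sub>v y2) + y3$0 * (x2 \<bullet> bb))
    + (x3$0 * (bl \<bullet> y1) + x3$0 * (bb \<bullet> y2) + 2 * c * x3$0 * y3$0 + x3 \<bullet> (r *\<^sub>v y4) + x3 \<bullet> (r *\<^sub>v y5)
    + (y3 \<bullet> (r *\<^sub>v x4) + x4 \<bullet> (L1 *\<^sub>v y4) + (y3 \<bullet> (r *\<^sub>v x5) + x5 \<bullet> (L2 *\<^sub>v y5))))"
proof -
  have d: "dim_row r = 1" "dim_col r = n" "dim_row Sh = ml" "dim_col Sh = ml" "dim_row Sbh = mb" "dim_col Sbh = mb"
    "dim_row L1 = n" "dim_col L1 = n" "dim_row L2 = n" "dim_col L2 = n" "dim_vec bl = ml" "dim_vec bb = mb"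
    "dim_vec x1 = ml" "dim_vec x2 = mb" "dim_vec x3 = 1" "dim_vec x4 = n" "dim_vec x5 = n"
    "dim_vec y1 = ml" "dim_vec y2 = mb" "dim_vec y3 = 1" "dim_vec y4 = n" "dim_vec y5 = n"
    using assms by auto
  show ?thesis unfolding M5_def
    by (simp add: d vcat_mult' hcat_mult' spa' spd' zmv' zl' zr' colv rowv sc1' tr_sp')
qed

lemma sym_bil: assumes M: "(M :: real mat) \<in> carrier_mat N N"
  and b: "\<And>x y. x \<in> carrier_vec N \<Longrightarrow> y \<in> carrier_vec N \<Longrightarrow> x \<bullet> (M *\<^sub>v y) = y \<bullet> (M *\<^sub>v x)"
  shows "transpose_mat M = M"
proof (rule eq_matI)
  fix i j assume i: "i < dim_row M" and j: "j < dim_col M"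
  have iN: "i < N" and jN: "j < N" using i j M by auto
  have e: "M $$ (i, j) = unit_vec N i \<bullet> (M *\<^sub>v unit_vec N j)" if "i < N" "j < N" for i j
    using that M by (simp add: scalar_prod_left_unit[of _ N] row_def)
  have "transpose_mat M $$ (i, j) = M $$ (j, i)" using i j M by auto
  also have "\<dots> = unit_vec N j \<bullet> (M *\<^sub>v unit_vec N i)" using e iN jN by auto
  also have "\<dots> = unit_vec N i \<bullet> (M *\<^sub>v unit_vec N j)" using b iN jN by auto
  also have "\<dots> = M $$ (i, j)" using e iN jN by auto
  finally show "transpose_mat M $$ (i, j) = M $$ (i, j)" .
qed (use M in auto)

lemma sum_delta_mult: fixes k m :: nat shows "k < m \<Longrightarrow> (\<Sum>i\<in>{0..<m}. (if k = i then a else 0) * b i) = a * (b k :: real)"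
proof -
  have "(\<Sum>i\<in>{0..<m}. (if k = i then a else 0) * b i) = (\<Sum>i\<in>{0..<m}. if k = i then a * b i else 0)"
    by (rule sum.cong) auto
  moreover have "k < m \<Longrightarrow> (\<Sum>i\<in>{0..<m}. if k = i then a * b i else 0) = a * b k"
    by (subst sum.delta') auto
  ultimately show "k < m \<Longrightarrow> ?thesis" by simp
qed

definition dm :: "nat \<Rightarrow> (nat \<Rightarrow> real) \<Rightarrow> real mat" where
  "dm m f = mat m m (\<lambda>(i,j). if i = j then f i else 0)"

lemma dm_carrier[simp]: "dm m f \<in> carrier_mat m m" unfolding dm_def by auto
lemma dm_dims[simp]: "dim_row (dm m f) = m" "dim_col (dm m f) = m" unfolding dm_def by auto

lemma Dplus_dm: "Dplus m D \<Longrightarrow> D = dm m (\<lambda>i. D $$ (i,i))"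
  unfolding Dplus_def dm_def diagonal_mat_def by (intro eq_matI) auto

lemma dm_mult_vec: assumes "dim_vec y = m" shows "dm m f *\<^sub>v y = vec m (\<lambda>k. f k * y $ k)"
proof (rule eq_vecI)
  fix k assume "k < dim_vec (vec m (\<lambda>k. f k * y $ k))"
  then have k: "k < m" by simp
  have "(dm m f *\<^sub>v y) $ k = (\<Sum>j\<in>{0..<m}. (if k = j then f k else 0) * y $ j)"
    using k assms unfolding dm_def by (auto simp: scalar_prod_def row_def intro!: sum.cong)
  also have "\<dots> = f k * y $ k" using k by (rule sum_delta_mult)
  finally show "(dm m f *\<^sub>v y) $ k = vec m (\<lambda>k. f k * y $ k) $ k" using k by simp
qed (simp add: dm_def)

lemma dm_quad: "dim_vec u = m \<Longrightarrow> dim_vec v = m \<Longrightarrow> u \<bullet> (dm m f *\<^sub>v v) = (\<Sum>k\<in>{0..<m}. f k * u $ k * v $ k)"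
  by (simp add: dm_mult_vec scalar_prod_def ac_simps)

lemma dm_quad2: "dim_vec u = m \<Longrightarrow> dim_vec v = m \<Longrightarrow> (dm m f *\<^sub>v v) \<bullet> u = (\<Sum>k\<in>{0..<m}. f k * u $ k * v $ k)"
  by (simp add: dm_mult_vec scalar_prod_def ac_simps)

lemma dm_mult: "dm m f * dm m g = dm m (\<lambda>i. f i * g i)"
proof (rule eq_matI)
  fix i j assume "i < dim_row (dm m (\<lambda>i. f i * g i))" "j < dim_col (dm m (\<lambda>i. f i * g i))"
  then have i: "i < m" and j: "j < m" by auto
  have "(dm m f * dm m g) $$ (i, j) = (\<Sum>k\<in>{0..<m}. (if i = k then f i else 0) * (if k = j then g k else 0))"
    using i j unfolding dm_def by (auto simp: scalar_prod_def row_def col_def intro!: sum.cong)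
  also have "\<dots> = f i * (if i = j then g i else 0)" using i by (rule sum_delta_mult)
  finally show "(dm m f * dm m g) $$ (i, j) = dm m (\<lambda>i. f i * g i) $$ (i, j)" using i j unfolding dm_def by simp
qed auto

lemma dm_one: "(\<forall>i<m. f i = 1) \<Longrightarrow> dm m f = 1\<^sub>m m"
  unfolding dm_def by (intro eq_matI) auto

lemma minv_dm: assumes f: "\<forall>i<m. f i \<noteq> 0" shows "minv (dm m f) = dm m (\<lambda>i. 1 / f i)"
proof -
  let ?g = "\<lambda>i. 1 / f i"
  have 1: "dm m f * dm m ?g = 1\<^sub>m m" "dm m ?g * dm m f = 1\<^sub>m m"
    unfolding dm_mult using f by (auto intro!: dm_one)
  have U: "dm m f \<in> Units (ring_mat TYPE(real) m ())"
    unfolding Units_def ring_mat_simps using 1 by auto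
  show ?thesis
  proof (cases "mat_inverse (dm m f)")
    case None
    from mat_inverse(1)[OF dm_carrier None, of "()"] U show ?thesis by simp
  next
    case (Some B)
    from mat_inverse(2)[OF dm_carrier Some] have B: "dm m f * B = 1\<^sub>m m" "B \<in> carrier_mat m m" by auto
    have "B = (dm m ?g * dm m f) * B" using B 1(2) by simp
    also have "\<dots> = dm m ?g * (dm m f * B)" using B by (intro assoc_mult_mat) auto
    also have "\<dots> = dm m ?g" using B by simp
    finally show ?thesis unfolding minv_def Some by simp
  qed
qed

lemma transpose_dm[simp]: "transpose_mat (dm m f) = dm m f"
  unfolding dm_def by (intro eq_matI) auto

lemma quad_PDP: assumes P: "P \<in> carrier_mat ml n" and u: "u \<in> carrier_vec n" and z: "z \<in> carrier_vec n"
  shows "u \<bullet> ((transpose_mat P * dm ml f * P) *\<^sub>v z) = (\<Sum>k\<in>{0..<ml}. f k * (P *\<^sub>v u) $ k * (P *\<^sub>v z) $ k)"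
proof -
  have "(transpose_mat P * dm ml f * P) *\<^sub>v z = transpose_mat P *\<^sub>v (dm ml f *\<^sub>v (P *\<^sub>v z))"
    using P z by (subst assoc_mult_mat_vec[of _ n ml], auto)+
  moreover have w: "dm ml f *\<^sub>v (P *\<^sub>v z) \<in> carrier_vec ml" by (rule carrier_vecI) simp
  moreover have "dim_vec (P *\<^sub>v z) = ml" "dim_vec (P *\<^sub>v u) = ml" using P by simp_all
  ultimately show ?thesis using tr_sp[OF P u w]
    by (simp add: dm_quad2)
qed

lemma quad_Lcal: assumes P: "P \<in> carrier_mat ml n" and u: "u \<in> carrier_vec n" and z: "z \<in> carrier_vec n"
  and S: "minv S' = dm ml s"
  shows "u \<bullet> (Lcal P (dm ml h) P S' *\<^sub>v z) = (\<Sum>k\<in>{0..<ml}. (2 * s k - s k * s k * h k) * (P *\<^sub>v u) $ k * (P *\<^sub>v z) $ k)"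
proof -
  have PT: "transpose_mat P \<in> carrier_mat n ml" using P by auto
  have e: "transpose_mat P * dm ml s * dm ml h * dm ml s * P = transpose_mat P * dm ml (\<lambda>k. s k * h k * s k) * P"
  proof -
    have "transpose_mat P * dm ml s * dm ml h = transpose_mat P * (dm ml s * dm ml h)"
      using PT by (intro assoc_mult_mat) auto
    then have "transpose_mat P * dm ml s * dm ml h * dm ml s = transpose_mat P * (dm ml s * dm ml h * dm ml s)"
      using PT by (simp add: assoc_mult_mat[of _ n ml _ ml _ ml] dm_mult)
    then show ?thesis by (simp add: dm_mult)
  qed
  have c: "transpose_mat P * dm ml f * P \<in> carrier_mat n n" for f using PT P by auto
  have c2: "(transpose_mat P * dm ml f * P) *\<^sub>v z \<in> carrier_vec n" for f using P by (intro carrier_vecI) simp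
  have "Lcal P (dm ml h) P S' = transpose_mat P * dm ml s * P + transpose_mat P * dm ml s * P - transpose_mat P * dm ml (\<lambda>k. s k * h k * s k) * P"
    unfolding Lcal_def S e ..
  then have "Lcal P (dm ml h) P S' *\<^sub>v z = (transpose_mat P * dm ml s * P) *\<^sub>v z + (transpose_mat P * dm ml s * P) *\<^sub>v z - (transpose_mat P * dm ml (\<lambda>k. s k * h k * s k) * P) *\<^sub>v z"
    using c z by (simp add: minus_mult_distrib_mat_vec[of _ n n] add_mult_distrib_mat_vec[of _ n n])
  then have "u \<bullet> (Lcal P (dm ml h) P S' *\<^sub>v z) = u \<bullet> ((transpose_mat P * dm ml s * P) *\<^sub>v z) + u \<bullet> ((transpose_mat P * dm ml s * P) *\<^sub>v z) - u \<bullet> ((transpose_mat P * dm ml (\<lambda>k. s k * h k * s k) * P) *\<^sub>v z)"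
    using c2 u by (simp add: scalar_prod_minus_distrib[of _ n] scalar_prod_add_distrib[of _ n])
  also have "\<dots> = (\<Sum>k\<in>{0..<ml}. (2 * s k - s k * s k * h k) * (P *\<^sub>v u) $ k * (P *\<^sub>v z) $ k)"
    unfolding quad_PDP[OF P u z] by (simp add: sum_subtractf sum.distrib[symmetric] algebra_simps)
  finally show ?thesis .
qed

lemma split_vec: "x \<in> carrier_vec (a + b) \<Longrightarrow> \<exists>x1 x2. x1 \<in> carrier_vec a \<and> x2 \<in> carrier_vec b \<and> x = x1 @\<^sub>v x2"
  by (rule exI[of _ "vec_first x a"], rule exI[of _ "vec_last x b"]) simp

lemma zero_append: "0\<^sub>v (a + b) = (0\<^sub>v a @\<^sub>v 0\<^sub>v b :: real vec)"
  by (intro eq_vecI) auto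

lemma app_zero: "x1 \<in> carrier_vec a \<Longrightarrow> x2 \<in> carrier_vec b \<Longrightarrow>
   (x1 @\<^sub>v x2 = (0\<^sub>v (a + b) :: real vec)) \<longleftrightarrow> x1 = 0\<^sub>v a \<and> x2 = 0\<^sub>v b"
  unfolding zero_append by (rule append_vec_eq) auto

definition B3 :: "real \<Rightarrow> real mat \<Rightarrow> real mat \<Rightarrow> real mat \<Rightarrow> real vec \<Rightarrow> real vec \<Rightarrow> real vec \<Rightarrow> real vec \<Rightarrow> real vec \<Rightarrow> real vec \<Rightarrow> real" where
  "B3 a r X Y x0 x1 x2 y0 y1 y2 = a * x0$0 * y0$0 + x0 \<bullet> (r *\<^sub>v y1) + x0 \<bullet> (r *\<^sub>v y2) + y0 \<bullet> (r *\<^sub>v x1) + x1 \<bullet> (X *\<^sub>v y1)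
    + y0 \<bullet> (r *\<^sub>v x2) + x2 \<bullet> (Y *\<^sub>v y2)"

lemma posdef3: assumes r: "r \<in> carrier_mat 1 n" and X: "X \<in> carrier_mat n n" and Y: "Y \<in> carrier_mat n n"
  and Xs: "\<And>u v. u \<in> carrier_vec n \<Longrightarrow> v \<in> carrier_vec n \<Longrightarrow> u \<bullet> (X *\<^sub>v v) = v \<bullet> (X *\<^sub>v u)"
  and Ys: "\<And>u v. u \<in> carrier_vec n \<Longrightarrow> v \<in> carrier_vec n \<Longrightarrow> u \<bullet> (Y *\<^sub>v v) = v \<bullet> (Y *\<^sub>v u)"
  shows "posdef (M3 a r X Y n) \<longleftrightarrow> (\<forall>x0 \<in> carrier_vec 1. \<forall>x1 \<in> carrier_vec n. \<forall>x2 \<in> carrier_vec n.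
     (x0 \<noteq> 0\<^sub>v 1 \<or> x1 \<noteq> 0\<^sub>v n \<or> x2 \<noteq> 0\<^sub>v n) \<longrightarrow> 0 < B3 a r X Y x0 x1 x2 x0 x1 x2)"
proof -
  have M: "M3 a r X Y n \<in> carrier_mat (1 + (n + n)) (1 + (n + n))" by (rule M3_carrier[OF r X Y])
  then have dr: "dim_row (M3 a r X Y n) = 1 + (n + n)" by auto
  have split: "\<exists>x0 x1 x2. x0 \<in> carrier_vec 1 \<and> x1 \<in> carrier_vec n \<and> x2 \<in> carrier_vec n \<and> x = x0 @\<^sub>v (x1 @\<^sub>v x2)"
    if "x \<in> carrier_vec (1 + (n + n))" for x
    using split_vec[OF that] split_vec by blast
  have bil: "(x0 @\<^sub>v (x1 @\<^sub>v x2)) \<bullet> (M3 a r X Y n *\<^sub>v (y0 @\<^sub>v (y1 @\<^sub>v y2))) = B3 a r X Y x0 x1 x2 y0 y1 y2"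
    if "x0 \<in> carrier_vec 1" "x1 \<in> carrier_vec n" "x2 \<in> carrier_vec n"
    "y0 \<in> carrier_vec 1" "y1 \<in> carrier_vec n" "y2 \<in> carrier_vec n" for x0 x1 x2 y0 y1 y2
    unfolding B3_def by (rule M3_bil[OF r X Y that])
  have symm: "B3 a r X Y x0 x1 x2 y0 y1 y2 = B3 a r X Y y0 y1 y2 x0 x1 x2"
    if "x0 \<in> carrier_vec 1" "x1 \<in> carrier_vec n" "x2 \<in> carrier_vec n"
    "y0 \<in> carrier_vec 1" "y1 \<in> carrier_vec n" "y2 \<in> carrier_vec n" for x0 x1 x2 y0 y1 y2
    unfolding B3_def using Xs[OF that(2,5)] Ys[OF that(3,6)] by simp
  have T: "transpose_mat (M3 a r X Y n) = M3 a r X Y n"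
  proof (rule sym_bil[OF M])
    fix x y :: "real vec" assume x: "x \<in> carrier_vec (1 + (n + n))" and y: "y \<in> carrier_vec (1 + (n + n))"
    from split[OF x] obtain x0 x1 x2 where xx: "x0 \<in> carrier_vec 1" "x1 \<in> carrier_vec n" "x2 \<in> carrier_vec n" "x = x0 @\<^sub>v (x1 @\<^sub>v x2)" by blast
    from split[OF y] obtain y0 y1 y2 where yy: "y0 \<in> carrier_vec 1" "y1 \<in> carrier_vec n" "y2 \<in> carrier_vec n" "y = y0 @\<^sub>v (y1 @\<^sub>v y2)" by blast
    show "x \<bullet> (M3 a r X Y n *\<^sub>v y) = y \<bullet> (M3 a r X Y n *\<^sub>v x)"
      unfolding xx(4) yy(4) bil[OF xx(1-3) yy(1-3)] bil[OF yy(1-3) xx(1-3)] by (rule symm[OF xx(1-3) yy(1-3)])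
  qed
  have Z: "(x0 @\<^sub>v (x1 @\<^sub>v x2) \<noteq> 0\<^sub>v (1 + (n + n))) \<longleftrightarrow> (x0 \<noteq> 0\<^sub>v 1 \<or> x1 \<noteq> 0\<^sub>v n \<or> x2 \<noteq> 0\<^sub>v n)"
    if "x0 \<in> carrier_vec 1" "x1 \<in> carrier_vec n" "x2 \<in> carrier_vec n" for x0 x1 x2 :: "real vec"
    using app_zero[OF that(1) append_carrier_vec[OF that(2,3)]] app_zero[OF that(2,3)] by blast
  show ?thesis
  proof
    assume p: "posdef (M3 a r X Y n)"
    show "\<forall>x0 \<in> carrier_vec 1. \<forall>x1 \<in> carrier_vec n. \<forall>x2 \<in> carrier_vec n.
     (x0 \<noteq> 0\<^sub>v 1 \<or> x1 \<noteq> 0\<^sub>v n \<or> x2 \<noteq> 0\<^sub>v n) \<longrightarrow> 0 < B3 a r X Y x0 x1 x2 x0 x1 x2"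
    proof (intro ballI impI)
      fix x0 x1 x2 :: "real vec" assume v: "x0 \<in> carrier_vec 1" "x1 \<in> carrier_vec n" "x2 \<in> carrier_vec n"
        and nz: "x0 \<noteq> 0\<^sub>v 1 \<or> x1 \<noteq> 0\<^sub>v n \<or> x2 \<noteq> 0\<^sub>v n"
      have "x0 @\<^sub>v (x1 @\<^sub>v x2) \<in> carrier_vec (1 + (n + n))" by (intro append_carrier_vec v)
      moreover have "x0 @\<^sub>v (x1 @\<^sub>v x2) \<noteq> 0\<^sub>v (1 + (n + n))" using Z[OF v] nz by blast
      ultimately have "0 < (x0 @\<^sub>v (x1 @\<^sub>v x2)) \<bullet> (M3 a r X Y n *\<^sub>v (x0 @\<^sub>v (x1 @\<^sub>v x2)))"
        using p unfolding posdef_def dr by blast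
      then show "0 < B3 a r X Y x0 x1 x2 x0 x1 x2" unfolding bil[OF v v] .
    qed
  next
    assume q: "\<forall>x0 \<in> carrier_vec 1. \<forall>x1 \<in> carrier_vec n. \<forall>x2 \<in> carrier_vec n.
     (x0 \<noteq> 0\<^sub>v 1 \<or> x1 \<noteq> 0\<^sub>v n \<or> x2 \<noteq> 0\<^sub>v n) \<longrightarrow> 0 < B3 a r X Y x0 x1 x2 x0 x1 x2"
    show "posdef (M3 a r X Y n)"
      unfolding posdef_def dr
    proof (intro conjI ballI impI)
      show "M3 a r X Y n \<in> carrier_mat (1 + (n + n)) (1 + (n + n))" by (rule M)
      show "transpose_mat (M3 a r X Y n) = M3 a r X Y n" by (rule T)
      fix x :: "real vec" assume x: "x \<in> carrier_vec (1 + (n + n))" and nz: "x \<noteq> 0\<^sub>v (1 + (n + n))"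
      from split[OF x] obtain x0 x1 x2 where xx: "x0 \<in> carrier_vec 1" "x1 \<in> carrier_vec n" "x2 \<in> carrier_vec n" "x = x0 @\<^sub>v (x1 @\<^sub>v x2)" by blast
      have "x0 \<noteq> 0\<^sub>v 1 \<or> x1 \<noteq> 0\<^sub>v n \<or> x2 \<noteq> 0\<^sub>v n" using Z[OF xx(1-3)] nz xx(4) by blast
      then have "0 < B3 a r X Y x0 x1 x2 x0 x1 x2" using q xx(1-3) by blast
      then show "0 < x \<bullet> (M3 a r X Y n *\<^sub>v x)" unfolding xx(4) bil[OF xx(1-3) xx(1-3)] .
    qed
  qed
qed

definition B5 :: "real \<Rightarrow> real mat \<Rightarrow> real vec \<Rightarrow> real vec \<Rightarrow> real mat \<Rightarrow> real mat \<Rightarrow> real mat \<Rightarrow> real mat \<Rightarrow>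
   real vec \<Rightarrow> real vec \<Rightarrow> real vec \<Rightarrow> real vec \<Rightarrow> real vec \<Rightarrow>
   real vec \<Rightarrow> real vec \<Rightarrow> real vec \<Rightarrow> real vec \<Rightarrow> real vec \<Rightarrow> real" where
  "B5 c r bl bb Sh Sbh L1 L2 x1 x2 x3 x4 x5 y1 y2 y3 y4 y5 =
    x1 \<bullet> (Sh *\<^sub>v y1) + y3$0 * (x1 \<bullet> bl) + (x2 \<bullet> (Sbh *\<^sub>v y2) + y3$0 * (x2 \<bullet> bb))
    + (x3$0 * (bl \<bullet> y1) + x3$0 * (bb \<bullet> y2) + 2 * c * x3$0 * y3$0 + x3 \<bullet> (r *\<^sub>v y4) + x3 \<bullet> (r *\<^sub>v y5)
    + (y3 \<bullet> (r *\<^sub>v x4) + x4 \<bullet> (L1 *\<^sub>v y4) + (y3 \<bullet> (r *\<^sub>v x5) + x5 \<bullet> (L2 *\<^sub>v y5))))"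

lemma M5_carrier: "r \<in> carrier_mat 1 n \<Longrightarrow> Sh \<in> carrier_mat ml ml \<Longrightarrow> Sbh \<in> carrier_mat mb mb \<Longrightarrow>
  L1 \<in> carrier_mat n n \<Longrightarrow> L2 \<in> carrier_mat n n \<Longrightarrow> bl \<in> carrier_vec ml \<Longrightarrow> bb \<in> carrier_vec mb \<Longrightarrow>
  M5 c r n ml mb bl bb Sh Sbh L1 L2 \<in> carrier_mat (ml + (mb + (1 + (n + n)))) (ml + (mb + (1 + (n + n))))"
  unfolding M5_def by (intro vcat_carrier hcat_carrier) auto

lemma posdef5: assumes r: "r \<in> carrier_mat 1 n" and Sh: "Sh \<in> carrier_mat ml ml" and Sbh: "Sbh \<in> carrier_mat mb mb"
  and L1: "L1 \<in> carrier_mat n n" and L2: "L2 \<in> carrier_mat n n"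
  and b: "bl \<in> carrier_vec ml" "bb \<in> carrier_vec mb"
  and S1: "\<And>u v. u \<in> carrier_vec ml \<Longrightarrow> v \<in> carrier_vec ml \<Longrightarrow> u \<bullet> (Sh *\<^sub>v v) = v \<bullet> (Sh *\<^sub>v u)"
  and S2: "\<And>u v. u \<in> carrier_vec mb \<Longrightarrow> v \<in> carrier_vec mb \<Longrightarrow> u \<bullet> (Sbh *\<^sub>v v) = v \<bullet> (Sbh *\<^sub>v u)"
  and S3: "\<And>u v. u \<in> carrier_vec n \<Longrightarrow> v \<in> carrier_vec n \<Longrightarrow> u \<bullet> (L1 *\<^sub>v v) = v \<bullet> (L1 *\<^sub>v u)"
  and S4: "\<And>u v. u \<in> carrier_vec n \<Longrightarrow> v \<in> carrier_vec n \<Longrightarrow> u \<bullet> (L2 *\<^sub>v v) = v \<bullet> (L2 *\<^sub>v u)"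
  shows "posdef (M5 c r n ml mb bl bb Sh Sbh L1 L2) \<longleftrightarrow> (\<forall>x1 \<in> carrier_vec ml. \<forall>x2 \<in> carrier_vec mb.
     \<forall>x3 \<in> carrier_vec 1. \<forall>x4 \<in> carrier_vec n. \<forall>x5 \<in> carrier_vec n.
     (x1 \<noteq> 0\<^sub>v ml \<or> x2 \<noteq> 0\<^sub>v mb \<or> x3 \<noteq> 0\<^sub>v 1 \<or> x4 \<noteq> 0\<^sub>v n \<or> x5 \<noteq> 0\<^sub>v n) \<longrightarrow>
       0 < B5 c r bl bb Sh Sbh L1 L2 x1 x2 x3 x4 x5 x1 x2 x3 x4 x5)"
proof -
  let ?M = "M5 c r n ml mb bl bb Sh Sbh L1 L2"
  let ?N = "ml + (mb + (1 + (n + n)))"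
  have M: "?M \<in> carrier_mat ?N ?N" by (rule M5_carrier[OF r Sh Sbh L1 L2 b])
  then have dr: "dim_row ?M = ?N" by auto
  have split: "\<exists>x1 x2 x3 x4 x5. x1 \<in> carrier_vec ml \<and> x2 \<in> carrier_vec mb \<and> x3 \<in> carrier_vec 1 \<and> x4 \<in> carrier_vec n \<and> x5 \<in> carrier_vec n
     \<and> x = x1 @\<^sub>v (x2 @\<^sub>v (x3 @\<^sub>v (x4 @\<^sub>v x5)))"
    if xN: "x \<in> carrier_vec ?N" for x :: "real vec"
  proof -
    obtain x1 y1 where a: "x1 \<in> carrier_vec ml" "y1 \<in> carrier_vec (mb + (1 + (n + n)))" "x = x1 @\<^sub>v y1" using split_vec[OF xN] by blast
    obtain x2 y2 where b: "x2 \<in> carrier_vec mb" "y2 \<in> carrier_vec (1 + (n + n))" "y1 = x2 @\<^sub>v y2" using split_vec[OF a(2)] by blast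
    obtain x3 y3 where c: "x3 \<in> carrier_vec 1" "y3 \<in> carrier_vec (n + n)" "y2 = x3 @\<^sub>v y3" using split_vec[OF b(2)] by blast
    obtain x4 x5 where d: "x4 \<in> carrier_vec n" "x5 \<in> carrier_vec n" "y3 = x4 @\<^sub>v x5" using split_vec[OF c(2)] by blast
    show ?thesis using a b c d by blast
  qed
  have bil: "(x1 @\<^sub>v (x2 @\<^sub>v (x3 @\<^sub>v (x4 @\<^sub>v x5)))) \<bullet> (?M *\<^sub>v (y1 @\<^sub>v (y2 @\<^sub>v (y3 @\<^sub>v (y4 @\<^sub>v y5)))))
     = B5 c r bl bb Sh Sbh L1 L2 x1 x2 x3 x4 x5 y1 y2 y3 y4 y5"
    if "x1 \<in> carrier_vec ml" "x2 \<in> carrier_vec mb" "x3 \<in> carrier_vec 1" "x4 \<in> carrier_vec n" "x5 \<in> carrier_vec n"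
    "y1 \<in> carrier_vec ml" "y2 \<in> carrier_vec mb" "y3 \<in> carrier_vec 1" "y4 \<in> carrier_vec n" "y5 \<in> carrier_vec n"
    for x1 x2 x3 x4 x5 y1 y2 y3 y4 y5
    unfolding B5_def by (rule M5_bil[OF r Sh Sbh L1 L2 b that])
  have symm: "B5 c r bl bb Sh Sbh L1 L2 x1 x2 x3 x4 x5 y1 y2 y3 y4 y5 = B5 c r bl bb Sh Sbh L1 L2 y1 y2 y3 y4 y5 x1 x2 x3 x4 x5"
    if "x1 \<in> carrier_vec ml" "x2 \<in> carrier_vec mb" "x3 \<in> carrier_vec 1" "x4 \<in> carrier_vec n" "x5 \<in> carrier_vec n"
    "y1 \<in> carrier_vec ml" "y2 \<in> carrier_vec mb" "y3 \<in> carrier_vec 1" "y4 \<in> carrier_vec n" "y5 \<in> carrier_vec n"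
    for x1 x2 x3 x4 x5 y1 y2 y3 y4 y5
    unfolding B5_def using S1[OF that(1,6)] S2[OF that(2,7)] S3[OF that(4,9)] S4[OF that(5,10)]
      comm_scalar_prod[OF that(1) b(1)] comm_scalar_prod[OF that(2) b(2)]
      comm_scalar_prod[OF that(6) b(1)] comm_scalar_prod[OF that(7) b(2)]
    by simp
  have T: "transpose_mat ?M = ?M"
  proof (rule sym_bil[OF M])
    fix x y :: "real vec" assume x: "x \<in> carrier_vec ?N" and y: "y \<in> carrier_vec ?N"
    from split[OF x] obtain x1 x2 x3 x4 x5 where xx: "x1 \<in> carrier_vec ml" "x2 \<in> carrier_vec mb" "x3 \<in> carrier_vec 1" "x4 \<in> carrier_vec n" "x5 \<in> carrier_vec n"
     "x = x1 @\<^sub>v (x2 @\<^sub>v (x3 @\<^sub>v (x4 @\<^sub>v x5)))" by blast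
    from split[OF y] obtain y1 y2 y3 y4 y5 where yy: "y1 \<in> carrier_vec ml" "y2 \<in> carrier_vec mb" "y3 \<in> carrier_vec 1" "y4 \<in> carrier_vec n" "y5 \<in> carrier_vec n"
     "y = y1 @\<^sub>v (y2 @\<^sub>v (y3 @\<^sub>v (y4 @\<^sub>v y5)))" by blast
    show "x \<bullet> (?M *\<^sub>v y) = y \<bullet> (?M *\<^sub>v x)"
      unfolding xx(6) yy(6) bil[OF xx(1-5) yy(1-5)] bil[OF yy(1-5) xx(1-5)] by (rule symm[OF xx(1-5) yy(1-5)])
  qed
  have Z: "(x1 @\<^sub>v (x2 @\<^sub>v (x3 @\<^sub>v (x4 @\<^sub>v x5))) \<noteq> 0\<^sub>v ?N) \<longleftrightarrow> (x1 \<noteq> 0\<^sub>v ml \<or> x2 \<noteq> 0\<^sub>v mb \<or> x3 \<noteq> 0\<^sub>v 1 \<or> x4 \<noteq> 0\<^sub>v n \<or> x5 \<noteq> 0\<^sub>v n)"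
    if "x1 \<in> carrier_vec ml" "x2 \<in> carrier_vec mb" "x3 \<in> carrier_vec 1" "x4 \<in> carrier_vec n" "x5 \<in> carrier_vec n"
    for x1 x2 x3 x4 x5 :: "real vec"
  proof -
    have a3: "x4 @\<^sub>v x5 \<in> carrier_vec (n + n)" using that by auto
    have a2: "x3 @\<^sub>v (x4 @\<^sub>v x5) \<in> carrier_vec (1 + (n + n))" using that a3 by (intro append_carrier_vec) auto
    have a1: "x2 @\<^sub>v (x3 @\<^sub>v (x4 @\<^sub>v x5)) \<in> carrier_vec (mb + (1 + (n + n)))" using that a2 by (intro append_carrier_vec) auto
    show ?thesis using app_zero[OF that(1) a1] app_zero[OF that(2) a2] app_zero[OF that(3) a3] app_zero[OF that(4,5)] by blast
  qed
  have cv: "x1 @\<^sub>v (x2 @\<^sub>v (x3 @\<^sub>v (x4 @\<^sub>v x5))) \<in> carrier_vec ?N"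
    if "x1 \<in> carrier_vec ml" "x2 \<in> carrier_vec mb" "x3 \<in> carrier_vec 1" "x4 \<in> carrier_vec n" "x5 \<in> carrier_vec n"
    for x1 x2 x3 x4 x5 :: "real vec"
    by (intro append_carrier_vec that)
  show ?thesis
  proof
    assume p: "posdef ?M"
    show "\<forall>x1 \<in> carrier_vec ml. \<forall>x2 \<in> carrier_vec mb.
     \<forall>x3 \<in> carrier_vec 1. \<forall>x4 \<in> carrier_vec n. \<forall>x5 \<in> carrier_vec n.
     (x1 \<noteq> 0\<^sub>v ml \<or> x2 \<noteq> 0\<^sub>v mb \<or> x3 \<noteq> 0\<^sub>v 1 \<or> x4 \<noteq> 0\<^sub>v n \<or> x5 \<noteq> 0\<^sub>v n) \<longrightarrow>
       0 < B5 c r bl bb Sh Sbh L1 L2 x1 x2 x3 x4 x5 x1 x2 x3 x4 x5"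
    proof (intro ballI impI)
      fix x1 x2 x3 x4 x5 :: "real vec"
      assume v: "x1 \<in> carrier_vec ml" "x2 \<in> carrier_vec mb" "x3 \<in> carrier_vec 1" "x4 \<in> carrier_vec n" "x5 \<in> carrier_vec n"
        and nz: "x1 \<noteq> 0\<^sub>v ml \<or> x2 \<noteq> 0\<^sub>v mb \<or> x3 \<noteq> 0\<^sub>v 1 \<or> x4 \<noteq> 0\<^sub>v n \<or> x5 \<noteq> 0\<^sub>v n"
      have "0 < (x1 @\<^sub>v (x2 @\<^sub>v (x3 @\<^sub>v (x4 @\<^sub>v x5)))) \<bullet> (?M *\<^sub>v (x1 @\<^sub>v (x2 @\<^sub>v (x3 @\<^sub>v (x4 @\<^sub>v x5)))))"
        using p cv[OF v] Z[OF v] nz unfolding posdef_def dr by blast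
      then show "0 < B5 c r bl bb Sh Sbh L1 L2 x1 x2 x3 x4 x5 x1 x2 x3 x4 x5" unfolding bil[OF v v] .
    qed
  next
    assume q: "\<forall>x1 \<in> carrier_vec ml. \<forall>x2 \<in> carrier_vec mb.
     \<forall>x3 \<in> carrier_vec 1. \<forall>x4 \<in> carrier_vec n. \<forall>x5 \<in> carrier_vec n.
     (x1 \<noteq> 0\<^sub>v ml \<or> x2 \<noteq> 0\<^sub>v mb \<or> x3 \<noteq> 0\<^sub>v 1 \<or> x4 \<noteq> 0\<^sub>v n \<or> x5 \<noteq> 0\<^sub>v n) \<longrightarrow>
       0 < B5 c r bl bb Sh Sbh L1 L2 x1 x2 x3 x4 x5 x1 x2 x3 x4 x5"
    show "posdef ?M"
      unfolding posdef_def dr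
    proof (intro conjI ballI impI)
      show "?M \<in> carrier_mat ?N ?N" by (rule M)
      show "transpose_mat ?M = ?M" by (rule T)
      fix x :: "real vec" assume x: "x \<in> carrier_vec ?N" and nz: "x \<noteq> 0\<^sub>v ?N"
      from split[OF x] obtain x1 x2 x3 x4 x5 where xx: "x1 \<in> carrier_vec ml" "x2 \<in> carrier_vec mb" "x3 \<in> carrier_vec 1" "x4 \<in> carrier_vec n" "x5 \<in> carrier_vec n"
       "x = x1 @\<^sub>v (x2 @\<^sub>v (x3 @\<^sub>v (x4 @\<^sub>v x5)))" by blast
      have "x1 \<noteq> 0\<^sub>v ml \<or> x2 \<noteq> 0\<^sub>v mb \<or> x3 \<noteq> 0\<^sub>v 1 \<or> x4 \<noteq> 0\<^sub>v n \<or> x5 \<noteq> 0\<^sub>v n" using Z[OF xx(1-5)] nz xx(6) by blast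
      then have "0 < B5 c r bl bb Sh Sbh L1 L2 x1 x2 x3 x4 x5 x1 x2 x3 x4 x5" using q xx(1-5) by blast
      then show "0 < x \<bullet> (?M *\<^sub>v x)" unfolding xx(6) bil[OF xx(1-5) xx(1-5)] .
    qed
  qed
qed

lemma cond3_M3: "Pl \<in> carrier_mat ml n \<Longrightarrow> cond3 c r Pl Pb bl bb Sl Sb =
   posdef (M3 (2 * c - bl \<bullet> (Sl *\<^sub>v bl) - bb \<bullet> (Sb *\<^sub>v bb)) r (transpose_mat Pl * Sl * Pl) (transpose_mat Pb * Sb * Pb) n)"
  unfolding cond3_def M3_def Let_def by auto

lemma lmi5_M5: "Pl \<in> carrier_mat ml n \<Longrightarrow> Pb \<in> carrier_mat mb n \<Longrightarrow> lmi5 c r Pl Pb Sl Sb bl bb Sh Sbh =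
   posdef (M5 c r n ml mb bl bb Sh Sbh (Lcal Pl Sh Pl (minv Sl)) (Lcal Pb Sbh Pb (minv Sb)))"
  unfolding lmi5_def M5_def Let_def by auto

lemma symPDP: "P \<in> carrier_mat ml n \<Longrightarrow> u \<in> carrier_vec n \<Longrightarrow> v \<in> carrier_vec n \<Longrightarrow>
  u \<bullet> ((transpose_mat P * dm ml f * P) *\<^sub>v v) = v \<bullet> ((transpose_mat P * dm ml f * P) *\<^sub>v u)"
  by (simp add: quad_PDP ac_simps)

lemma symLcal: "P \<in> carrier_mat ml n \<Longrightarrow> u \<in> carrier_vec n \<Longrightarrow> v \<in> carrier_vec n \<Longrightarrow> minv S' = dm ml s \<Longrightarrow>
  u \<bullet> (Lcal P (dm ml h) P S' *\<^sub>v v) = v \<bullet> (Lcal P (dm ml h) P S' *\<^sub>v u)"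
  by (simp add: quad_Lcal ac_simps)

lemma symdm: "u \<in> carrier_vec m \<Longrightarrow> v \<in> carrier_vec m \<Longrightarrow> u \<bullet> (dm m f *\<^sub>v v) = v \<bullet> (dm m f *\<^sub>v u)"
  by (simp add: dm_quad ac_simps)

lemma sp_sum: "x \<in> carrier_vec m \<Longrightarrow> b \<in> carrier_vec m \<Longrightarrow> x \<bullet> b = (\<Sum>k\<in>{0..<m}. x $ k * b $ k)"
  unfolding scalar_prod_def by simp

lemma g1: assumes s: "\<forall>k<m. s k > 0" and x: "x \<in> carrier_vec m" and b: "b \<in> carrier_vec m"
  shows "x \<bullet> (dm m (\<lambda>k. 1 / s k) *\<^sub>v x) + t * (x \<bullet> b) + t * (b \<bullet> x) + t * t * (b \<bullet> (dm m s *\<^sub>v b))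
     = (\<Sum>k\<in>{0..<m}. (x $ k + t * s k * b $ k)^2 / s k)"
proof -
  have "x \<bullet> (dm m (\<lambda>k. 1 / s k) *\<^sub>v x) + t * (x \<bullet> b) + t * (b \<bullet> x) + t * t * (b \<bullet> (dm m s *\<^sub>v b))
     = (\<Sum>k\<in>{0..<m}. 1 / s k * x $ k * x $ k + t * (x $ k * b $ k) + t * (b $ k * x $ k) + t * t * (s k * b $ k * b $ k))"
    using x b unfolding dm_quad[OF carrier_vecD[OF x] carrier_vecD[OF x]] dm_quad[OF carrier_vecD[OF b] carrier_vecD[OF b]]
      sp_sum[OF x b] sp_sum[OF b x] by (simp only: sum.distrib sum_distrib_left)
  also have "\<dots> = (\<Sum>k\<in>{0..<m}. (x $ k + t * s k * b $ k)^2 / s k)"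
  proof (rule sum.cong)
    fix k assume "k \<in> {0..<m}"
    then have "s k > 0" using s by auto
    then show "1 / s k * x $ k * x $ k + t * (x $ k * b $ k) + t * (b $ k * x $ k) + t * t * (s k * b $ k * b $ k) = (x $ k + t * s k * b $ k)^2 / s k"
      by (simp add: field_simps power2_eq_square)
  qed simp
  finally show ?thesis .
qed

lemma Fnonneg: "\<forall>k<m. s k > 0 \<Longrightarrow> 0 \<le> (\<Sum>k\<in>{0..<m}. (x $ k + t * s k * b $ k)^2 / (s k :: real))"
  by (intro sum_nonneg) auto

lemma Fpos: assumes s: "\<forall>k<m. s k > 0" and x: "x \<in> carrier_vec m" and nz: "x \<noteq> 0\<^sub>v m"
  shows "0 < (\<Sum>k\<in>{0..<m}. (x $ k + 0 * s k * b $ k)^2 / (s k :: real))"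
proof -
  obtain k where k: "k < m" "x $ k \<noteq> 0" using x nz by (metis carrier_vecD eq_vecI index_zero_vec(1) index_zero_vec(2))
  show ?thesis by (rule sum_pos2[of _ k]) (use k s in auto)
qed

lemma part1: assumes Pl: "Pl \<in> carrier_mat ml n" and Pb: "Pb \<in> carrier_mat mb n" and r: "r \<in> carrier_mat 1 n"
  and b: "bl \<in> carrier_vec ml" "bb \<in> carrier_vec mb"
  and s: "\<forall>k<ml. s k > 0" and s': "\<forall>k<mb. s' k > 0"
  and C: "cond3 c r Pl Pb bl bb (dm ml s) (dm mb s')"
  shows "lmi5 c r Pl Pb (dm ml s) (dm mb s') bl bb (dm ml (\<lambda>k. 1 / s k)) (dm mb (\<lambda>k. 1 / s' k))"
proof -
  let ?a = "2 * c - bl \<bullet> (dm ml s *\<^sub>v bl) - bb \<bullet> (dm mb s' *\<^sub>v bb)"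
  let ?X = "transpose_mat Pl * dm ml s * Pl" and ?Y = "transpose_mat Pb * dm mb s' * Pb"
  have Xc: "?X \<in> carrier_mat n n" and Yc: "?Y \<in> carrier_mat n n" using Pl Pb by auto
  have P3: "posdef (M3 ?a r ?X ?Y n)" using C unfolding cond3_M3[OF Pl] .
  have Q3: "\<forall>x0 \<in> carrier_vec 1. \<forall>x1 \<in> carrier_vec n. \<forall>x2 \<in> carrier_vec n.
     (x0 \<noteq> 0\<^sub>v 1 \<or> x1 \<noteq> 0\<^sub>v n \<or> x2 \<noteq> 0\<^sub>v n) \<longrightarrow> 0 < B3 ?a r ?X ?Y x0 x1 x2 x0 x1 x2"
    using P3 posdef3[OF r Xc Yc symPDP[OF Pl] symPDP[OF Pb]] by blast
  have mi1: "minv (dm ml s) = dm ml (\<lambda>k. 1 / s k)" using s by (intro minv_dm) auto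
  have mi2: "minv (dm mb s') = dm mb (\<lambda>k. 1 / s' k)" using s' by (intro minv_dm) auto
  have mm1: "minv (minv (dm ml s)) = dm ml s" unfolding mi1 using s by (subst minv_dm) auto
  have mm2: "minv (minv (dm mb s')) = dm mb s'" unfolding mi2 using s' by (subst minv_dm) auto
  let ?L1 = "Lcal Pl (dm ml (\<lambda>k. 1 / s k)) Pl (minv (dm ml s))"
  let ?L2 = "Lcal Pb (dm mb (\<lambda>k. 1 / s' k)) Pb (minv (dm mb s'))"
  have L1c: "?L1 \<in> carrier_mat n n" and L2c: "?L2 \<in> carrier_mat n n"
    using Pl Pb unfolding Lcal_def mi1 mi2 by auto
  have e1: "u \<bullet> (?L1 *\<^sub>v u) = u \<bullet> (?X *\<^sub>v u)" if "u \<in> carrier_vec n" for u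
    unfolding quad_Lcal[OF Pl that that mm1] quad_PDP[OF Pl that that]
    by (rule sum.cong) (use s in auto)
  have e2: "u \<bullet> (?L2 *\<^sub>v u) = u \<bullet> (?Y *\<^sub>v u)" if "u \<in> carrier_vec n" for u
    unfolding quad_Lcal[OF Pb that that mm2] quad_PDP[OF Pb that that]
    by (rule sum.cong) (use s' in auto)
  let ?Sh = "dm ml (\<lambda>k. 1 / s k)" and ?Sbh = "dm mb (\<lambda>k. 1 / s' k)"
  have main: "0 < B5 c r bl bb ?Sh ?Sbh ?L1 ?L2 x1 x2 x3 x4 x5 x1 x2 x3 x4 x5"
    if v: "x1 \<in> carrier_vec ml" "x2 \<in> carrier_vec mb" "x3 \<in> carrier_vec 1" "x4 \<in> carrier_vec n" "x5 \<in> carrier_vec n"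
      and nz: "x1 \<noteq> 0\<^sub>v ml \<or> x2 \<noteq> 0\<^sub>v mb \<or> x3 \<noteq> 0\<^sub>v 1 \<or> x4 \<noteq> 0\<^sub>v n \<or> x5 \<noteq> 0\<^sub>v n"
    for x1 x2 x3 x4 x5 :: "real vec"
  proof -
    define t where "t = x3 $ 0"
    define F1 where "F1 = (\<Sum>k\<in>{0..<ml}. (x1 $ k + t * s k * bl $ k)^2 / s k)"
    define F2 where "F2 = (\<Sum>k\<in>{0..<mb}. (x2 $ k + t * s' k * bb $ k)^2 / s' k)"
    have G1: "x1 \<bullet> (dm ml (\<lambda>k. 1 / s k) *\<^sub>v x1) + t * (x1 \<bullet> bl) + t * (bl \<bullet> x1) + t * t * (bl \<bullet> (dm ml s *\<^sub>v bl)) = F1"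
      unfolding F1_def by (rule g1[OF s v(1) b(1)])
    have G2: "x2 \<bullet> (dm mb (\<lambda>k. 1 / s' k) *\<^sub>v x2) + t * (x2 \<bullet> bb) + t * (bb \<bullet> x2) + t * t * (bb \<bullet> (dm mb s' *\<^sub>v bb)) = F2"
      unfolding F2_def by (rule g1[OF s' v(2) b(2)])
    have eq: "B5 c r bl bb (dm ml (\<lambda>k. 1 / s k)) (dm mb (\<lambda>k. 1 / s' k)) ?L1 ?L2 x1 x2 x3 x4 x5 x1 x2 x3 x4 x5
       = B3 ?a r ?X ?Y x3 x4 x5 x3 x4 x5 + F1 + F2"
      unfolding B5_def B3_def e1[OF v(4)] e2[OF v(5)] t_def[symmetric] using G1 G2
      by (simp add: algebra_simps)
    have F1: "0 \<le> F1" unfolding F1_def by (rule Fnonneg[OF s])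
    have F2: "0 \<le> F2" unfolding F2_def by (rule Fnonneg[OF s'])
    show ?thesis
    proof (cases "x3 \<noteq> 0\<^sub>v 1 \<or> x4 \<noteq> 0\<^sub>v n \<or> x5 \<noteq> 0\<^sub>v n")
      case True
      then have "0 < B3 ?a r ?X ?Y x3 x4 x5 x3 x4 x5" using Q3 v by blast
      then show ?thesis unfolding eq using F1 F2 by linarith
    next
      case False
      then have z: "x3 = 0\<^sub>v 1" "x4 = 0\<^sub>v n" "x5 = 0\<^sub>v n" by auto
      have t0: "t = 0" unfolding t_def z(1) by simp
      have B30: "B3 ?a r ?X ?Y x3 x4 x5 x3 x4 x5 = 0" unfolding B3_def z using r Xc Yc by simp
      have "x1 \<noteq> 0\<^sub>v ml \<or> x2 \<noteq> 0\<^sub>v mb" using nz z by auto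
      then have "0 < F1 + F2"
      proof
        assume "x1 \<noteq> 0\<^sub>v ml"
        then have "0 < F1" unfolding F1_def t0 by (rule Fpos[OF s v(1)])
        then show ?thesis using F2 by linarith
      next
        assume "x2 \<noteq> 0\<^sub>v mb"
        then have "0 < F2" unfolding F2_def t0 by (rule Fpos[OF s' v(2)])
        then show ?thesis using F1 by linarith
      qed
      then show ?thesis unfolding eq B30 by linarith
    qed
  qed
  show ?thesis unfolding lmi5_M5[OF Pl Pb]
    apply (rule posdef5[OF r dm_carrier dm_carrier L1c L2c b, THEN iffD2])
    apply (rule symdm, assumption, assumption)
    apply (rule symdm, assumption, assumption)
    apply (rule symLcal[OF Pl _ _ mm1], assumption, assumption)
    apply (rule symLcal[OF Pb _ _ mm2], assumption, assumption)
    using main by blast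
qed

lemma g2: fixes t :: real assumes h: "\<forall>k<m. h k > 0" and b: "b \<in> carrier_vec m"
  defines "x \<equiv> vec m (\<lambda>k. - t * b $ k / h k)"
  shows "x \<bullet> (dm m h *\<^sub>v x) + t * (x \<bullet> b) + t * (b \<bullet> x) = - (t * t * (b \<bullet> (dm m (\<lambda>k. 1 / h k) *\<^sub>v b)))"
proof -
  have x: "x \<in> carrier_vec m" unfolding x_def by simp
  have "x \<bullet> (dm m h *\<^sub>v x) + t * (x \<bullet> b) + t * (b \<bullet> x)
     = (\<Sum>k\<in>{0..<m}. h k * x $ k * x $ k + t * (x $ k * b $ k) + t * (b $ k * x $ k))"
    using x b unfolding dm_quad[OF carrier_vecD[OF x] carrier_vecD[OF x]]
      sp_sum[OF x b] sp_sum[OF b x] by (simp only: sum.distrib sum_distrib_left)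
  also have "\<dots> = (\<Sum>k\<in>{0..<m}. - (t * t * (1 / h k * b $ k * b $ k)))"
  proof (rule sum.cong)
    fix k assume "k \<in> {0..<m}"
    then have k: "k < m" and hk: "h k > 0" using h by auto
    show "h k * x $ k * x $ k + t * (x $ k * b $ k) + t * (b $ k * x $ k) = - (t * t * (1 / h k * b $ k * b $ k))"
      unfolding x_def using k hk by (simp add: field_simps)
  qed simp
  also have "\<dots> = - (t * t * (b \<bullet> (dm m (\<lambda>k. 1 / h k) *\<^sub>v b)))"
    unfolding dm_quad[OF carrier_vecD[OF b] carrier_vecD[OF b]] by (simp add: sum_negf sum_distrib_left)
  finally show ?thesis .
qed

lemma e_le: assumes P: "P \<in> carrier_mat ml n" and u: "u \<in> carrier_vec n"
  and S: "minv S' = dm ml s" and h: "\<forall>k<ml. h k > 0"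
  shows "u \<bullet> (Lcal P (dm ml h) P S' *\<^sub>v u) \<le> u \<bullet> ((transpose_mat P * dm ml (\<lambda>k. 1 / h k) * P) *\<^sub>v u)"
  unfolding quad_Lcal[OF P u u S] quad_PDP[OF P u u]
proof (rule sum_mono)
  fix k assume "k \<in> {0..<ml}"
  then have hk: "h k > 0" using h by auto
  define w where "w = (P *\<^sub>v u) $ k"
  have "1 / h k * w * w - (2 * s k - s k * s k * h k) * w * w = (1 - s k * h k)^2 * w * w / h k"
    using hk by (simp add: field_simps power2_eq_square)
  also have "\<dots> \<ge> 0" using hk by (simp add: mult.assoc)
  finally show "(2 * s k - s k * s k * h k) * (P *\<^sub>v u) $ k * (P *\<^sub>v u) $ k \<le> 1 / h k * (P *\<^sub>v u) $ k * (P *\<^sub>v u) $ k"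
    unfolding w_def by linarith
qed

lemma part2: assumes Pl: "Pl \<in> carrier_mat ml n" and Pb: "Pb \<in> carrier_mat mb n" and r: "r \<in> carrier_mat 1 n"
  and b: "bl \<in> carrier_vec ml" "bb \<in> carrier_vec mb"
  and s: "\<forall>k<ml. s k > 0" and s': "\<forall>k<mb. s' k > 0"
  and h: "\<forall>k<ml. h k > 0" and h': "\<forall>k<mb. h' k > 0"
  and L: "lmi5 c r Pl Pb (dm ml s) (dm mb s') bl bb (dm ml h) (dm mb h')"
  shows "cond3 c r Pl Pb bl bb (dm ml (\<lambda>k. 1 / h k)) (dm mb (\<lambda>k. 1 / h' k))"
proof -
  have mi1: "minv (dm ml s) = dm ml (\<lambda>k. 1 / s k)" using s by (intro minv_dm) auto
  have mi2: "minv (dm mb s') = dm mb (\<lambda>k. 1 / s' k)" using s' by (intro minv_dm) auto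
  have mm1: "minv (minv (dm ml s)) = dm ml s" unfolding mi1 using s by (subst minv_dm) auto
  have mm2: "minv (minv (dm mb s')) = dm mb s'" unfolding mi2 using s' by (subst minv_dm) auto
  let ?L1 = "Lcal Pl (dm ml h) Pl (minv (dm ml s))"
  let ?L2 = "Lcal Pb (dm mb h') Pb (minv (dm mb s'))"
  have L1c: "?L1 \<in> carrier_mat n n" and L2c: "?L2 \<in> carrier_mat n n"
    using Pl Pb unfolding Lcal_def mi1 mi2 by auto
  have P5: "posdef (M5 c r n ml mb bl bb (dm ml h) (dm mb h') ?L1 ?L2)" using L unfolding lmi5_M5[OF Pl Pb] .
  have Q5: "\<forall>x1 \<in> carrier_vec ml. \<forall>x2 \<in> carrier_vec mb.
     \<forall>x3 \<in> carrier_vec 1. \<forall>x4 \<in> carrier_vec n. \<forall>x5 \<in> carrier_vec n.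
     (x1 \<noteq> 0\<^sub>v ml \<or> x2 \<noteq> 0\<^sub>v mb \<or> x3 \<noteq> 0\<^sub>v 1 \<or> x4 \<noteq> 0\<^sub>v n \<or> x5 \<noteq> 0\<^sub>v n) \<longrightarrow>
       0 < B5 c r bl bb (dm ml h) (dm mb h') ?L1 ?L2 x1 x2 x3 x4 x5 x1 x2 x3 x4 x5"
    apply (rule posdef5[OF r dm_carrier dm_carrier L1c L2c b, THEN iffD1])
    apply (rule symdm, assumption, assumption)
    apply (rule symdm, assumption, assumption)
    apply (rule symLcal[OF Pl _ _ mm1], assumption, assumption)
    apply (rule symLcal[OF Pb _ _ mm2], assumption, assumption)
    by (rule P5)
  let ?a = "2 * c - bl \<bullet> (dm ml (\<lambda>k. 1 / h k) *\<^sub>v bl) - bb \<bullet> (dm mb (\<lambda>k. 1 / h' k) *\<^sub>v bb)"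
  let ?X = "transpose_mat Pl * dm ml (\<lambda>k. 1 / h k) * Pl" and ?Y = "transpose_mat Pb * dm mb (\<lambda>k. 1 / h' k) * Pb"
  have Xc: "?X \<in> carrier_mat n n" and Yc: "?Y \<in> carrier_mat n n" using Pl Pb by auto
  have main: "0 < B3 ?a r ?X ?Y x3 x4 x5 x3 x4 x5"
    if v: "x3 \<in> carrier_vec 1" "x4 \<in> carrier_vec n" "x5 \<in> carrier_vec n"
      and nz: "x3 \<noteq> 0\<^sub>v 1 \<or> x4 \<noteq> 0\<^sub>v n \<or> x5 \<noteq> 0\<^sub>v n"
    for x3 x4 x5 :: "real vec"
  proof -
    define t where "t = x3 $ 0"
    define x1 where "x1 = vec ml (\<lambda>k. - t * bl $ k / h k)"
    define x2 where "x2 = vec mb (\<lambda>k. - t * bb $ k / h' k)"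
    have x1: "x1 \<in> carrier_vec ml" and x2: "x2 \<in> carrier_vec mb" unfolding x1_def x2_def by auto
    have pos: "0 < B5 c r bl bb (dm ml h) (dm mb h') ?L1 ?L2 x1 x2 x3 x4 x5 x1 x2 x3 x4 x5"
      using Q5 x1 x2 v nz by blast
    have G1: "x1 \<bullet> (dm ml h *\<^sub>v x1) + t * (x1 \<bullet> bl) + t * (bl \<bullet> x1) = - (t * t * (bl \<bullet> (dm ml (\<lambda>k. 1 / h k) *\<^sub>v bl)))"
      unfolding x1_def by (rule g2[OF h b(1)])
    have G2: "x2 \<bullet> (dm mb h' *\<^sub>v x2) + t * (x2 \<bullet> bb) + t * (bb \<bullet> x2) = - (t * t * (bb \<bullet> (dm mb (\<lambda>k. 1 / h' k) *\<^sub>v bb)))"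
      unfolding x2_def by (rule g2[OF h' b(2)])
    have E1: "x4 \<bullet> (?L1 *\<^sub>v x4) \<le> x4 \<bullet> (?X *\<^sub>v x4)" by (rule e_le[OF Pl v(2) mm1 h])
    have E2: "x5 \<bullet> (?L2 *\<^sub>v x5) \<le> x5 \<bullet> (?Y *\<^sub>v x5)" by (rule e_le[OF Pb v(3) mm2 h'])
    have eq: "B5 c r bl bb (dm ml h) (dm mb h') ?L1 ?L2 x1 x2 x3 x4 x5 x1 x2 x3 x4 x5
       = B3 ?a r ?X ?Y x3 x4 x5 x3 x4 x5 - (x4 \<bullet> (?X *\<^sub>v x4) - x4 \<bullet> (?L1 *\<^sub>v x4)) - (x5 \<bullet> (?Y *\<^sub>v x5) - x5 \<bullet> (?L2 *\<^sub>v x5))"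
      unfolding B5_def B3_def t_def[symmetric] using G1 G2
      by (simp add: algebra_simps)
    show ?thesis using pos eq E1 E2 by linarith
  qed
  show ?thesis unfolding cond3_M3[OF Pl]
    apply (rule posdef3[OF r Xc Yc, THEN iffD2])
    apply (rule symPDP[OF Pl], assumption, assumption)
    apply (rule symPDP[OF Pb], assumption, assumption)
    using main by blast
qed

lemma Dplus_pos: "Dplus m D \<Longrightarrow> \<forall>k<m. D $$ (k,k) > 0" unfolding Dplus_def by auto

lemma minv_Dplus: "Dplus m D \<Longrightarrow> minv D = dm m (\<lambda>k. 1 / D $$ (k,k))"
  by (subst Dplus_dm, assumption, rule minv_dm) (auto simp: Dplus_def)

lemma A1: assumes Pl: "Pl \<in> carrier_mat ml n" and Pb: "Pb \<in> carrier_mat mb n" and r: "r \<in> carrier_mat 1 n"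
  and b: "bl \<in> carrier_vec ml" "bb \<in> carrier_vec mb"
  and D: "Dplus ml Sl" "Dplus mb Sb"
  and C: "cond3 c r Pl Pb bl bb Sl Sb"
  shows "lmi5 c r Pl Pb Sl Sb bl bb (minv Sl) (minv Sb)"
proof -
  define sl where "sl = (\<lambda>k. Sl $$ (k,k))"
  define sb where "sb = (\<lambda>k. Sb $$ (k,k))"
  have e: "Sl = dm ml sl" "Sb = dm mb sb" unfolding sl_def sb_def using D by (auto intro: Dplus_dm)
  have mi: "minv Sl = dm ml (\<lambda>k. 1 / sl k)" "minv Sb = dm mb (\<lambda>k. 1 / sb k)"
    unfolding sl_def sb_def using D by (auto intro: minv_Dplus)
  have C': "cond3 c r Pl Pb bl bb (dm ml sl) (dm mb sb)" using C e by metis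
  have R: "lmi5 c r Pl Pb (dm ml sl) (dm mb sb) bl bb (dm ml (\<lambda>k. 1 / sl k)) (dm mb (\<lambda>k. 1 / sb k))"
    by (rule part1[OF Pl Pb r b _ _ C']) (use D in \<open>auto simp: sl_def sb_def Dplus_def\<close>)
  show ?thesis unfolding mi using R e by metis
qed

lemma A2: assumes Pl: "Pl \<in> carrier_mat ml n" and Pb: "Pb \<in> carrier_mat mb n" and r: "r \<in> carrier_mat 1 n"
  and b: "bl \<in> carrier_vec ml" "bb \<in> carrier_vec mb"
  and D: "Dplus ml Sl" "Dplus mb Sb" "Dplus ml Sh" "Dplus mb Sbh"
  and L: "lmi5 c r Pl Pb Sl Sb bl bb Sh Sbh"
  shows "cond3 c r Pl Pb bl bb (minv Sh) (minv Sbh)"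
proof -
  have e: "Sl = dm ml (\<lambda>k. Sl $$ (k,k))" "Sb = dm mb (\<lambda>k. Sb $$ (k,k))"
    "Sh = dm ml (\<lambda>k. Sh $$ (k,k))" "Sbh = dm mb (\<lambda>k. Sbh $$ (k,k))" using D by (auto intro: Dplus_dm)
  have L': "lmi5 c r Pl Pb (dm ml (\<lambda>k. Sl $$ (k,k))) (dm mb (\<lambda>k. Sb $$ (k,k))) bl bb
     (dm ml (\<lambda>k. Sh $$ (k,k))) (dm mb (\<lambda>k. Sbh $$ (k,k)))"
    using L e by metis
  show ?thesis unfolding minv_Dplus[OF D(3)] minv_Dplus[OF D(4)]
    by (rule part2[OF Pl Pb r b Dplus_pos[OF D(1)] Dplus_pos[OF D(2)] Dplus_pos[OF D(3)] Dplus_pos[OF D(4)] L'])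
qed

theorem theorem3:
  fixes nx nu ml mb mx mu :: nat
    and Pl Pb Vx Vu :: "real mat" and vx vu :: "real vec"
  assumes "Pl \<in> carrier_mat ml nx" and "Pb \<in> carrier_mat mb nx"
    and "Vx \<in> carrier_mat mx nx" and "vx \<in> carrier_vec mx"
    and "Vu \<in> carrier_mat mu nu" and "vu \<in> carrier_vec mu"
  shows
   "(\<forall>i<mx. \<forall>bl bb Sl Sb.
       bl \<in> carrier_vec ml \<and> bb \<in> carrier_vec mb \<and> Dplus ml Sl \<and> Dplus mb Sb \<and>
       condX Pl Pb Vx vx i bl bb Sl Sb \<longrightarrow>
         lmiX Pl Pb Vx vx i Sl Sb bl bb (minv Sl) (minv Sb) \<and>
         (\<forall>bl' bb' Sh Sbh.
            bl' \<in> carrier_vec ml \<and> bb' \<in> carrier_vec mb \<and> Dplus ml Sh \<and> Dplus mb Sbh \<and>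
            lmiX Pl Pb Vx vx i Sl Sb bl' bb' Sh Sbh \<longrightarrow>
              condX Pl Pb Vx vx i bl' bb' (minv Sh) (minv Sbh)))
    \<and>
    (\<forall>i<mu. \<forall>K bl bb Rl Rb.
       K \<in> carrier_mat nu nx \<and>
       bl \<in> carrier_vec ml \<and> bb \<in> carrier_vec mb \<and> Dplus ml Rl \<and> Dplus mb Rb \<and>
       condU Pl Pb Vu vu i K bl bb Rl Rb \<longrightarrow>
         lmiU Pl Pb Vu vu i Rl Rb K bl bb (minv Rl) (minv Rb) \<and>
         (\<forall>K' bl' bb' Rh Rbh.
            K' \<in> carrier_mat nu nx \<and>
            bl' \<in> carrier_vec ml \<and> bb' \<in> carrier_vec mb \<and> Dplus ml Rh \<and> Dplus mb Rbh \<and>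
            lmiU Pl Pb Vu vu i Rl Rb K' bl' bb' Rh Rbh \<longrightarrow>
              condU Pl Pb Vu vu i K' bl' bb' (minv Rh) (minv Rbh)))"
proof (intro conjI allI impI)
  have Pl: "Pl \<in> carrier_mat ml nx" and Pb: "Pb \<in> carrier_mat mb nx" using assms by auto
  {
    fix i bl bb Sl Sb
    assume i: "i < mx" and H: "bl \<in> carrier_vec ml \<and> bb \<in> carrier_vec mb \<and> Dplus ml Sl \<and> Dplus mb Sb \<and>
       condX Pl Pb Vx vx i bl bb Sl Sb"
    have r: "mat_of_rows (dim_col Vx) [row Vx i] \<in> carrier_mat 1 nx" using assms(3) i by auto
    show "lmiX Pl Pb Vx vx i Sl Sb bl bb (minv Sl) (minv Sb)"
      unfolding lmiX_def using H unfolding condX_def by (intro A1[OF Pl Pb r]) auto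
    fix bl' bb' Sh Sbh
    assume H': "bl' \<in> carrier_vec ml \<and> bb' \<in> carrier_vec mb \<and> Dplus ml Sh \<and> Dplus mb Sbh \<and>
            lmiX Pl Pb Vx vx i Sl Sb bl' bb' Sh Sbh"
    show "condX Pl Pb Vx vx i bl' bb' (minv Sh) (minv Sbh)"
      unfolding condX_def using H H' unfolding lmiX_def by (intro A2[OF Pl Pb r]) auto
  }
  {
    fix i K bl bb Rl Rb
    assume i: "i < mu" and H: "K \<in> carrier_mat nu nx \<and>
       bl \<in> carrier_vec ml \<and> bb \<in> carrier_vec mb \<and> Dplus ml Rl \<and> Dplus mb Rb \<and>
       condU Pl Pb Vu vu i K bl bb Rl Rb"
    have r: "mat_of_rows (dim_col Vu) [row Vu i] * K \<in> carrier_mat 1 nx" using assms(5) i H by auto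
    show "lmiU Pl Pb Vu vu i Rl Rb K bl bb (minv Rl) (minv Rb)"
      unfolding lmiU_def using H unfolding condU_def by (intro A1[OF Pl Pb r]) auto
    fix K' bl' bb' Rh Rbh
    assume H': "K' \<in> carrier_mat nu nx \<and>
            bl' \<in> carrier_vec ml \<and> bb' \<in> carrier_vec mb \<and> Dplus ml Rh \<and> Dplus mb Rbh \<and>
            lmiU Pl Pb Vu vu i Rl Rb K' bl' bb' Rh Rbh"
    have r': "mat_of_rows (dim_col Vu) [row Vu i] * K' \<in> carrier_mat 1 nx" using assms(5) i H' by auto
    show "condU Pl Pb Vu vu i K' bl' bb' (minv Rh) (minv Rbh)"
      unfolding condU_def using H H' unfolding lmiU_def by (intro A2[OF Pl Pb r']) auto
  }
qed

end
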